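(* Let $\gamma:[0,1]\to M_{m,n}(\mathbb{C})$ be a smooth curve with $\gamma(0)=C$ and $\gamma(1)=D$. Then $$ s(D-C)\prec_w \int_0^1 s(\gamma'(t))\,dt. $$
   Context: For a complex matrix $Z$, $s(Z)$ denotes the vector of its singular values counting multiplicities arranged non-increasingly; the integral of a vector-valued function is taken entrywise. For real vectors $x,y$ of equal length $\ell$, $x\prec_w y$ means $\sum_{i=1}^r x_i^\downarrow\le\sum_{i=1}^r y_i^\downarrow$ for $r=1,\dots,\ell$, with $x^\downarrow$ the non-increasing rearrangement. *)

theory Defs
  imports "HOL-Analysis.Analysis" "HOL-Computational_Algebra.Polynomial" "HOL-Library.Multiset"
begin

definition cadjoint :: "complex^'n^'m \<Rightarrow> complex^'m^'n" where
  "cadjoint Z = (\<chi> i j. cnj (Z $ j $ i))"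

definition cpoly :: "complex^'n^'n \<Rightarrow> complex poly" where
  "cpoly A = det (\<chi> i j. (if i = j then [:0, 1:] else 0) - [:A $ i $ j:])"

definition eig_mset :: "complex^'n^'n \<Rightarrow> complex multiset" where
  "eig_mset A = (\<Sum>x\<in>{x. poly (cpoly A) x = 0}. replicate_mset (order x (cpoly A)) x)"

definition singvals :: "complex^'n^'m \<Rightarrow> real list" where
  "singvals Z = take (min CARD('m) CARD('n))
     (rev (sorted_list_of_multiset (image_mset (\<lambda>z. sqrt (Re z)) (eig_mset (cadjoint Z ** Z)))))"

definition weak_majorized :: "real list \<Rightarrow> real list \<Rightarrow> bool" (infix "\<prec>\<^sub>w" 50) where
  "x \<prec>\<^sub>w y \<longleftrightarrow> length x = length y \<and>
     (\<forall>r\<in>{1..length x}. sum_list (take r (rev (sort x))) \<le> sum_list (take r (rev (sort y))))"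

definition smooth_on_01 :: "(real \<Rightarrow> 'a::real_normed_vector) \<Rightarrow> bool" where
  "smooth_on_01 g \<longleftrightarrow> (\<exists>f. f 0 = g \<and>
     (\<forall>k. \<forall>t\<in>{0..1}. (f k has_vector_derivative f (Suc k) t) (at t within {0..1})))"

end

theory Submission
  imports Defs
begin

definition cinner :: "complex^'n \<Rightarrow> complex^'n \<Rightarrow> complex" where
  "cinner u v = (\<Sum>i\<in>UNIV. cnj (u$i) * v$i)"

lemma cinner_add_right: "cinner u (v + w) = cinner u v + cinner u w"
  by (simp add: cinner_def distrib_left sum.distrib)
lemma cinner_add_left: "cinner (u + v) w = cinner u w + cinner v w"
  by (simp add: cinner_def distrib_right sum.distrib)
lemma cinner_diff_right: "cinner u (v - w) = cinner u v - cinner u w"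
  by (simp add: cinner_def right_diff_distrib sum_subtractf)
lemma cinner_diff_left: "cinner (u - v) w = cinner u w - cinner v w"
  by (simp add: cinner_def left_diff_distrib sum_subtractf)
lemma cinner_scale_right: "cinner u (c *s v) = c * cinner u v"
  by (simp add: cinner_def sum_distrib_left algebra_simps)
lemma cinner_scale_left: "cinner (c *s u) v = cnj c * cinner u v"
  by (simp add: cinner_def sum_distrib_left algebra_simps)
lemma cinner_scaleR_right: "cinner u (c *\<^sub>R v) = of_real c * cinner u v"
  unfolding cinner_def by (simp add: sum_distrib_left) (simp add: scaleR_conv_of_real mult_ac)
lemma cinner_scaleR_left: "cinner (c *\<^sub>R u) v = of_real c * cinner u v"
  unfolding cinner_def by (simp add: sum_distrib_left) (simp add: scaleR_conv_of_real mult_ac)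
lemma cinner_zero_right[simp]: "cinner u 0 = 0" by (simp add: cinner_def)
lemma cinner_zero_left[simp]: "cinner 0 u = 0" by (simp add: cinner_def)
lemma cinner_sum_right: "cinner u (\<Sum>a\<in>A. f a) = (\<Sum>a\<in>A. cinner u (f a))"
  by (induct A rule: infinite_finite_induct) (auto simp: cinner_add_right)
lemma cinner_sum_left: "cinner (\<Sum>a\<in>A. f a) u = (\<Sum>a\<in>A. cinner (f a) u)"
  by (induct A rule: infinite_finite_induct) (auto simp: cinner_add_left)
lemma cinner_commute: "cinner v u = cnj (cinner u v)"
  by (simp add: cinner_def cnj_sum mult.commute)

lemma norm_sq_vec: "(norm (x::complex^'n))^2 = (\<Sum>i\<in>UNIV. (cmod (x$i))^2)"
  by (simp add: norm_vec_def L2_set_def sum_nonneg)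

lemma cinner_self: "cinner x x = of_real ((norm x)^2)"
  unfolding norm_sq_vec cinner_def of_real_sum
  by (rule sum.cong) (auto simp del: of_real_power simp: complex_norm_square mult.commute)

lemma Re_cinner: "Re (cinner x y) = inner x y"
  by (simp add: cinner_def inner_vec_def inner_complex_def Re_sum)

lemma cinner_adjoint: "cinner u (A *v v) = cinner (cadjoint A *v u) v"
proof -
  have "cinner u (A *v v) = (\<Sum>i\<in>UNIV. \<Sum>j\<in>UNIV. cnj (u$i) * A$i$j * v$j)"
    by (simp add: cinner_def matrix_vector_mult_def sum_distrib_left mult_ac)
  also have "\<dots> = (\<Sum>j\<in>UNIV. \<Sum>i\<in>UNIV. cnj (u$i) * A$i$j * v$j)"
    by (rule sum.swap)
  also have "\<dots> = cinner (cadjoint A *v u) v"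
    by (simp add: cinner_def matrix_vector_mult_def cadjoint_def sum_distrib_left cnj_sum mult_ac)
  finally show ?thesis by simp
qed

lemma cadjoint_mult: "cadjoint (A ** B) = cadjoint B ** cadjoint A"
  unfolding cadjoint_def matrix_matrix_mult_def
  by (simp add: vec_eq_iff cnj_sum mult.commute)

lemma cadjoint_cadjoint[simp]: "cadjoint (cadjoint A) = A"
  by (simp add: cadjoint_def vec_eq_iff)

lemma norm_zero_iff_cinner: "cinner x x = 0 \<longleftrightarrow> x = 0"
  by (simp add: cinner_self)

definition orthoc :: "nat \<Rightarrow> (nat \<Rightarrow> complex^'n) \<Rightarrow> bool" where
  "orthoc k F \<longleftrightarrow> (\<forall>a<k. \<forall>b<k. a \<noteq> b \<longrightarrow> cinner (F a) (F b) = 0) \<and> (\<forall>a<k. norm (F a) \<le> 1)"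

definition orthon :: "nat \<Rightarrow> (nat \<Rightarrow> complex^'n) \<Rightarrow> bool" where
  "orthon k F \<longleftrightarrow> (\<forall>a<k. \<forall>b<k. cinner (F a) (F b) = (if a = b then 1 else 0))"

lemma sum_single:
  assumes "finite A" "a \<in> A" "\<And>b. b \<in> A \<Longrightarrow> b \<noteq> a \<Longrightarrow> f b = 0"
  shows "sum f A = f a"
proof -
  have "sum f A = f a + sum f (A - {a})" using assms by (simp add: sum.remove)
  also have "sum f (A - {a}) = 0" using assms by (intro sum.neutral) auto
  finally show ?thesis by simp
qed

lemma orthon_norm: assumes "orthon k F" "a < k" shows "norm (F a) = 1"
proof -
  have "cinner (F a) (F a) = 1" using assms unfolding orthon_def by auto
  then have "of_real ((norm (F a))^2) = (1::complex)" by (simp only: cinner_self)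
  then have "(norm (F a))^2 = 1" by (simp only: of_real_eq_1_iff)
  then show ?thesis using norm_ge_zero[of "F a"] by (simp add: power2_eq_1_iff)
qed

lemma orthon_orthoc: "orthon k F \<Longrightarrow> orthoc k F"
  using orthon_norm[of k F] unfolding orthon_def orthoc_def by auto

lemma orthoc_mono: "orthoc k F \<Longrightarrow> j \<le> k \<Longrightarrow> orthoc j F"
  unfolding orthoc_def by auto

lemma orthon_mono: "orthon k F \<Longrightarrow> j \<le> k \<Longrightarrow> orthon j F"
  unfolding orthon_def by auto

lemma cinner_expand_sum:
  assumes "orthoc k F"
  shows "cinner (\<Sum>a<k. c a *s F a) (\<Sum>b<k. c b *s F b) = (\<Sum>a<k. of_real ((cmod (c a))^2 * (norm (F a))^2))"
proof -
  have "cinner (\<Sum>a<k. c a *s F a) (\<Sum>b<k. c b *s F b) =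
      (\<Sum>a<k. cnj (c a) * (\<Sum>b<k. c b * cinner (F a) (F b)))"
    by (simp only: cinner_sum_left cinner_scale_left) (simp add: cinner_sum_right cinner_scale_right sum_distrib_left)
  also have "\<dots> = (\<Sum>a<k. cnj (c a) * (c a * cinner (F a) (F a)))"
  proof (rule sum.cong[OF refl])
    fix a assume a: "a \<in> {..<k}"
    have "(\<Sum>b<k. c b * cinner (F a) (F b)) = c a * cinner (F a) (F a)"
      by (rule sum_single) (use assms a in \<open>auto simp: orthoc_def\<close>)
    then show "cnj (c a) * (\<Sum>b<k. c b * cinner (F a) (F b)) = cnj (c a) * (c a * cinner (F a) (F a))"
      by simp
  qed
  also have "\<dots> = (\<Sum>a<k. of_real ((cmod (c a))^2 * (norm (F a))^2))"
    by (rule sum.cong[OF refl]) (simp add: cinner_self complex_norm_square[symmetric] mult_ac del: of_real_power)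
  finally show ?thesis .
qed

lemma bessel:
  assumes "orthoc k F"
  shows "(\<Sum>a<k. (cmod (cinner (F a) x))^2) \<le> (norm x)^2"
proof -
  define c where "c a = cinner (F a) x" for a
  define w where "w = x - (\<Sum>a<k. c a *s F a)"
  have ca: "cinner x (F a) = cnj (c a)" for a by (simp add: c_def cinner_commute[of x])
  have "cinner w w = cinner x x - (\<Sum>a<k. c a * cinner x (F a)) - (\<Sum>a<k. cnj (c a) * cinner (F a) x)
      + cinner (\<Sum>a<k. c a *s F a) (\<Sum>b<k. c b *s F b)"
  proof -
    have e1: "cinner x (\<Sum>a<k. c a *s F a) = (\<Sum>a<k. c a * cinner x (F a))"
      by (simp add: cinner_sum_right cinner_scale_right)
    have e2: "cinner (\<Sum>a<k. c a *s F a) x = (\<Sum>a<k. cnj (c a) * cinner (F a) x)"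
      by (simp add: cinner_sum_left cinner_scale_left)
    show ?thesis unfolding w_def cinner_diff_left cinner_diff_right e1 e2 by simp
  qed
  also have "\<dots> = of_real ((norm x)^2 - 2 * (\<Sum>a<k. (cmod (c a))^2) + (\<Sum>a<k. (cmod (c a))^2 * (norm (F a))^2))"
    unfolding cinner_expand_sum[OF assms] ca
    by (simp add: cinner_self c_def[symmetric] complex_norm_square[symmetric] mult.commute of_real_sum)
  finally have "of_real ((norm w)^2) = (of_real ((norm x)^2 - 2 * (\<Sum>a<k. (cmod (c a))^2) + (\<Sum>a<k. (cmod (c a))^2 * (norm (F a))^2)) :: complex)"
    by (simp only: cinner_self)
  then have "(norm w)^2 = (norm x)^2 - 2 * (\<Sum>a<k. (cmod (c a))^2) + (\<Sum>a<k. (cmod (c a))^2 * (norm (F a))^2)"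
    by (simp only: of_real_eq_iff)
  then have "0 \<le> (norm x)^2 - 2 * (\<Sum>a<k. (cmod (c a))^2) + (\<Sum>a<k. (cmod (c a))^2 * (norm (F a))^2)"
    by (metis zero_le_power2)
  moreover have "(\<Sum>a<k. (cmod (c a))^2 * (norm (F a))^2) \<le> (\<Sum>a<k. (cmod (c a))^2)"
  proof (rule sum_mono)
    fix a assume "a \<in> {..<k}"
    then have "norm (F a) \<le> 1" using assms by (auto simp: orthoc_def)
    then have "(norm (F a))^2 \<le> 1" by (simp add: power_le_one)
    then show "(cmod (c a))^2 * (norm (F a))^2 \<le> (cmod (c a))^2"
      by (simp add: mult_left_le)
  qed
  ultimately show ?thesis by (simp add: c_def)
qed

lemma orthon_cinner: "orthon k F \<Longrightarrow> a < k \<Longrightarrow> b < k \<Longrightarrow> cinner (F a) (F b) = (if a = b then 1 else 0)"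
  unfolding orthon_def by auto

lemma orthon_set_facts:
  fixes F :: "nat \<Rightarrow> complex^'n"
  assumes o: "orthon k F"
  defines "S \<equiv> F ` {..<k} \<union> (\<lambda>a. \<i> *s F a) ` {..<k}"
  shows "pairwise orthogonal S" "0 \<notin> S" "card S = 2 * k"
proof -
  have c1: "cinner (F a) (F b) = (if a = b then 1 else 0)" if "a < k" "b < k" for a b
    using orthon_cinner[OF o that] .
  have c2: "cinner (F a) (\<i> *s F b) = \<i> * (if a = b then 1 else 0)" if "a < k" "b < k" for a b
    using c1[OF that] by (simp add: cinner_scale_right)
  have c3: "cinner (\<i> *s F a) (F b) = - \<i> * (if a = b then 1 else 0)" if "a < k" "b < k" for a b
    using c1[OF that] by (simp add: cinner_scale_left)
  have c4: "cinner (\<i> *s F a) (\<i> *s F b) = (if a = b then 1 else 0)" if "a < k" "b < k" for a b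
    using c1[OF that] by (simp add: cinner_scale_left cinner_scale_right)
  show "pairwise orthogonal S"
    unfolding pairwise_def orthogonal_def S_def Re_cinner[symmetric]
    by (auto simp: c1 c2 c3 c4)
  show "0 \<notin> S"
  proof
    assume "0 \<in> S"
    then obtain a where "a < k" "F a = 0 \<or> \<i> *s F a = 0" unfolding S_def by auto
    then show False using c1[of a a] c4[of a a] by auto
  qed
  have i1: "inj_on F {..<k}"
  proof (rule inj_onI)
    fix a b assume "a \<in> {..<k}" "b \<in> {..<k}" "F a = F b"
    then show "a = b" using c1[of a a] c1[of a b] by (auto split: if_splits)
  qed
  have i2: "inj_on (\<lambda>a. \<i> *s F a) {..<k}"
  proof (rule inj_onI)
    fix a b assume "a \<in> {..<k}" "b \<in> {..<k}" "\<i> *s F a = \<i> *s F b"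
    then show "a = b" using c4[of a a] c4[of a b] by (auto split: if_splits)
  qed
  have d: "F ` {..<k} \<inter> (\<lambda>a. \<i> *s F a) ` {..<k} = {}"
  proof (rule ccontr)
    assume "F ` {..<k} \<inter> (\<lambda>a. \<i> *s F a) ` {..<k} \<noteq> {}"
    then obtain a b where ab: "a < k" "b < k" "F a = \<i> *s F b" by auto
    then have "cinner (F a) (F a) = cinner (F a) (\<i> *s F b)" by simp
    then show False using c1[of a a] c2[of a b] ab by (auto split: if_splits)
  qed
  show "card S = 2 * k"
    unfolding S_def by (subst card_Un_disjoint) (use d i1 i2 in \<open>auto simp: card_image\<close>)
qed

lemma orthon_card:
  fixes F :: "nat \<Rightarrow> complex^'n"
  assumes o: "orthon k F"
  shows "k \<le> CARD('n)"
proof -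
  define S where "S = F ` {..<k} \<union> (\<lambda>a. \<i> *s F a) ` {..<k}"
  have "independent S"
    using orthon_set_facts[OF o] unfolding S_def by (intro pairwise_orthogonal_independent) auto
  then have "card S \<le> DIM(complex^'n)" using independent_bound by blast
  then show ?thesis using orthon_set_facts(3)[OF o] unfolding S_def by simp
qed

lemma scale_decomp: "c *s (v::complex^'n) = Re c *\<^sub>R v + Im c *\<^sub>R (\<i> *s v)"
  by (simp add: vec_eq_iff complex_eq_iff algebra_simps)

lemma proj_orth:
  assumes o: "orthon k F" and b: "b < k"
  shows "cinner (F b) (x - (\<Sum>a<k. cinner (F a) x *s F a)) = 0"
proof -
  have "cinner (F b) (\<Sum>a<k. cinner (F a) x *s F a) = (\<Sum>a<k. cinner (F a) x * cinner (F b) (F a))"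
    by (simp add: cinner_sum_right cinner_scale_right)
  also have "\<dots> = cinner (F b) x * cinner (F b) (F b)"
    by (rule sum_single) (use o b in \<open>auto simp: orthon_def\<close>)
  also have "\<dots> = cinner (F b) x" using o b by (simp add: orthon_def)
  finally show ?thesis by (simp add: cinner_diff_right)
qed

lemma orthon_extend:
  fixes F :: "nat \<Rightarrow> complex^'n"
  assumes o: "orthon k F" and k: "k < CARD('n)"
  shows "\<exists>w. w \<noteq> 0 \<and> (\<forall>a<k. cinner (F a) w = 0)"
proof (rule ccontr)
  assume H: "\<not> ?thesis"
  define S where "S = F ` {..<k} \<union> (\<lambda>a. \<i> *s F a) ` {..<k}"
  have fin: "finite S" unfolding S_def by auto
  have sp: "x \<in> span S" for x
  proof -
    have "\<forall>a<k. cinner (F a) (x - (\<Sum>a<k. cinner (F a) x *s F a)) = 0"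
      using proj_orth[OF o] by blast
    then have "x - (\<Sum>a<k. cinner (F a) x *s F a) = 0" using H by blast
    then have "x = (\<Sum>a<k. cinner (F a) x *s F a)" by simp
    also have "\<dots> \<in> span S"
    proof (rule span_sum)
      fix a assume "a \<in> {..<k}"
      then have "F a \<in> S" "\<i> *s F a \<in> S" unfolding S_def by auto
      then show "cinner (F a) x *s F a \<in> span S"
        by (subst scale_decomp) (intro span_add span_scale span_base)
    qed
    finally show ?thesis .
  qed
  have d1: "dim (UNIV :: (complex^'n) set) \<le> card S"
    using span_card_ge_dim[OF subset_UNIV _ fin] sp by blast
  have d2: "dim (UNIV :: (complex^'n) set) = 2 * CARD('n)"
    by (simp only: dim_UNIV DIM_cart DIM_complex)
  moreover have "card S \<le> 2 * k"
  proof -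
    have "card S \<le> card (F ` {..<k}) + card ((\<lambda>a. \<i> *s F a) ` {..<k})"
      unfolding S_def by (rule card_Un_le)
    also have "\<dots> \<le> k + k"
      using card_image_le[of "{..<k}" F] card_image_le[of "{..<k}" "\<lambda>a. \<i> *s F a"] by simp
    finally show ?thesis by simp
  qed
  ultimately show False using k d1 d2 by linarith
qed

lemma orthon_complete:
  fixes F :: "nat \<Rightarrow> complex^'n"
  assumes o: "orthon CARD('n) F" and w: "\<forall>a<CARD('n). cinner (F a) w = 0"
  shows "w = 0"
proof (rule ccontr)
  assume "w \<noteq> 0"
  then have nw: "norm w \<noteq> 0" by simp
  define G where "G = F(CARD('n) := (1 / norm w) *\<^sub>R w)"
  have "orthon (Suc CARD('n)) G"
    unfolding orthon_def
  proof (intro allI impI)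
    fix a b assume a: "a < Suc CARD('n)" and b: "b < Suc CARD('n)"
    have ww: "cinner ((1 / norm w) *\<^sub>R w) ((1 / norm w) *\<^sub>R w) = 1"
      using nw by (simp add: cinner_scaleR_left cinner_scaleR_right cinner_self power2_eq_square
          of_real_mult[symmetric] del: of_real_mult)
    have wa: "cinner ((1 / norm w) *\<^sub>R w) (F a) = 0" if "a < CARD('n)" for a
      using w that by (simp add: cinner_scaleR_left cinner_commute[of w])
    show "cinner (G a) (G b) = (if a = b then 1 else 0)"
      using a b o ww wa w
      by (cases "a = CARD('n)"; cases "b = CARD('n)")
         (auto simp: G_def orthon_def less_Suc_eq cinner_scaleR_right)
  qed
  from orthon_card[OF this] show False by simp
qed

lemma orthon_expand:
  fixes F :: "nat \<Rightarrow> complex^'n"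
  assumes o: "orthon CARD('n) F"
  shows "x = (\<Sum>a<CARD('n). cinner (F a) x *s F a)"
  using orthon_complete[OF o, of "x - (\<Sum>a<CARD('n). cinner (F a) x *s F a)"] proj_orth[OF o]
  by simp

definition rq :: "complex^'n^'n \<Rightarrow> complex^'n \<Rightarrow> real" where
  "rq H y = Re (cinner y (H *v y))"

lemma herm_sym: "cadjoint H = H \<Longrightarrow> cinner u (H *v v) = cinner (H *v u) v"
  using cinner_adjoint[of u H v] by simp

lemma herm_real: assumes "cadjoint H = H" shows "cinner y (H *v y) = of_real (rq H y)"
proof -
  have "cinner y (H *v y) = cnj (cinner y (H *v y))"
    using herm_sym[OF assms, of y y] cinner_commute[of "H *v y" y] by simp
  then show ?thesis unfolding rq_def by (simp add: complex_eq_iff)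
qed

lemma mv_scaleR: "(A::complex^'n^'m) *v (c *\<^sub>R v) = c *\<^sub>R (A *v v)"
  by (simp add: vec_eq_iff matrix_vector_mult_def sum_distrib_left scaleR_conv_of_real[where 'a=complex] mult_ac)

lemma rq_scaleR: "rq H (c *\<^sub>R y) = c^2 * rq H y"
  by (simp add: rq_def mv_scaleR cinner_scaleR_left cinner_scaleR_right power2_eq_square)

lemma rq_zero[simp]: "rq H 0 = 0" by (simp add: rq_def)

lemma cont_cinner: "continuous_on S (\<lambda>y::complex^'n. cinner a y)"
  unfolding cinner_def by (intro continuous_intros)

lemma cont_rq: "continuous_on S (rq H)"
  unfolding rq_def cinner_def matrix_vector_mult_def by (simp, intro continuous_intros)

lemma max_eig:
  fixes H :: "complex^'n^'n"
  assumes herm: "cadjoint H = H" and o: "orthon k F"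
    and eig: "\<forall>a<k. H *v F a = of_real (lam a) *s F a" and k: "k < CARD('n)"
  shows "\<exists>x. norm x = 1 \<and> (\<forall>a<k. cinner (F a) x = 0) \<and> H *v x = of_real (rq H x) *s x \<and>
     (\<forall>y. (\<forall>a<k. cinner (F a) y = 0) \<longrightarrow> rq H y \<le> rq H x * (norm y)^2)"
proof -
  define K where "K = sphere (0::complex^'n) 1 \<inter> (\<Inter>a\<in>{..<k}. {y. cinner (F a) y = 0})"
  have cK: "compact K" unfolding K_def
    by (intro compact_Int_closed compact_sphere closed_INT ballI closed_Collect_eq continuous_intros cont_cinner)
  obtain w where w: "w \<noteq> 0" "\<forall>a<k. cinner (F a) w = 0" using orthon_extend[OF o k] by blast
  have "(1 / norm w) *\<^sub>R w \<in> K" using w unfolding K_def by (simp add: cinner_scaleR_right)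
  then have neK: "K \<noteq> {}" by auto
  obtain x where xK: "x \<in> K" and xmax: "\<forall>y\<in>K. rq H y \<le> rq H x"
    using continuous_attains_sup[OF cK neK cont_rq] by blast
  define \<mu> where "\<mu> = rq H x"
  have nx: "norm x = 1" and Wx: "\<forall>a<k. cinner (F a) x = 0" using xK unfolding K_def by auto
  have hom: "rq H y \<le> \<mu> * (norm y)^2" if Wy: "\<forall>a<k. cinner (F a) y = 0" for y
  proof (cases "y = 0")
    case True then show ?thesis by simp
  next
    case False
    then have ny: "norm y > 0" by simp
    have "(1 / norm y) *\<^sub>R y \<in> K" using Wy False unfolding K_def by (simp add: cinner_scaleR_right)
    then have "rq H ((1 / norm y) *\<^sub>R y) \<le> \<mu>" using xmax unfolding \<mu>_def by blast
    then have "rq H y / (norm y)^2 \<le> \<mu>" by (simp add: rq_scaleR power_divide)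
    then show ?thesis using ny by (simp add: divide_le_eq mult.commute)
  qed
  have cxx: "cinner x x = 1" using nx by (simp add: cinner_self)
  have cxHx: "cinner x (H *v x) = of_real \<mu>" unfolding \<mu>_def by (rule herm_real[OF herm])
  define v where "v = H *v x - of_real \<mu> *s x"
  have Hx: "H *v x = v + of_real \<mu> *s x" unfolding v_def by simp
  have Wv: "\<forall>a<k. cinner (F a) v = 0"
  proof (intro allI impI)
    fix a assume a: "a < k"
    have "cinner (F a) (H *v x) = cinner (H *v F a) x" by (rule herm_sym[OF herm])
    also have "\<dots> = 0" using eig a Wx by (simp add: cinner_scale_left)
    finally show "cinner (F a) v = 0" using Wx a by (simp add: v_def cinner_diff_right cinner_scale_right)
  qed
  have cxv: "cinner x v = 0" unfolding v_def using cxx cxHx by (simp add: cinner_diff_right cinner_scale_right)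
  have cvx: "cinner v x = 0" using cxv cinner_commute[of v x] by simp
  have cxHv: "cinner x (H *v v) = of_real ((norm v)^2)"
    using herm_sym[OF herm, of x v] Hx cxv by (simp add: cinner_add_left cinner_scale_left cinner_self)
  have cvHx: "cinner v (H *v x) = of_real ((norm v)^2)"
    using Hx cvx by (simp add: cinner_add_right cinner_scale_right cinner_self)
  have "v = 0"
  proof (rule ccontr)
    assume "v \<noteq> 0"
    define a where "a = (norm v)^2"
    have apos: "a > 0" using \<open>v \<noteq> 0\<close> by (simp add: a_def)
    define B where "B = rq H v"
    define c where "c = \<mu> * a - B"
    define t where "t = a / (\<bar>c\<bar> + 1)"
    have tpos: "t > 0" using apos by (simp add: t_def)
    define y where "y = x + t *\<^sub>R v"
    have Wy: "\<forall>a<k. cinner (F a) y = 0" using Wx Wv by (simp add: y_def cinner_add_right cinner_scaleR_right)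
    have e1: "cinner y (H *v y) = cinner x (H *v x) + of_real t * cinner x (H *v v)
        + of_real t * cinner v (H *v x) + of_real t * of_real t * cinner v (H *v v)"
      by (simp add: y_def matrix_vector_right_distrib mv_scaleR cinner_add_left
          cinner_add_right cinner_scaleR_left cinner_scaleR_right algebra_simps)
    have e2: "cinner y y = cinner x x + of_real t * cinner x v + of_real t * cinner v x
        + of_real t * of_real t * cinner v v"
      by (simp add: y_def cinner_add_left cinner_add_right cinner_scaleR_left cinner_scaleR_right algebra_simps)
    have r1: "rq H y = \<mu> + 2 * t * a + t * t * B"
      unfolding rq_def e1 cxHx cxHv cvHx B_def a_def by (simp add: rq_def)
    have r2: "(norm y)^2 = 1 + t * t * a"
    proof -
      have "of_real ((norm y)^2) = (of_real (1 + t * t * a) :: complex)"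
        unfolding cinner_self[symmetric] e2 cxx cxv cvx a_def by (simp add: cinner_self)
      then show ?thesis by (simp only: of_real_eq_iff)
    qed
    have "\<mu> + 2 * t * a + t * t * B \<le> \<mu> * (1 + t * t * a)" using hom[OF Wy] r1 r2 by simp
    then have "t * (2 * a) \<le> t * (t * c)" by (simp add: c_def algebra_simps)
    then have "2 * a \<le> t * c" using tpos by simp
    also have "\<dots> \<le> t * \<bar>c\<bar>" using tpos by (simp add: mult_left_mono)
    also have "\<dots> < a"
    proof -
      have "t * \<bar>c\<bar> = a * (\<bar>c\<bar> / (\<bar>c\<bar> + 1))" by (simp add: t_def)
      also have "\<dots> < a * 1" using apos by (intro mult_strict_left_mono) auto
      finally show ?thesis by simp
    qed
    finally show False using apos by simp
  qed
  then have "H *v x = of_real (rq H x) *s x" using Hx unfolding \<mu>_def by simp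
  then show ?thesis using nx Wx hom unfolding \<mu>_def by blast
qed

lemma spectral_aux:
  fixes H :: "complex^'n^'n"
  assumes herm: "cadjoint H = H"
  shows "k \<le> CARD('n) \<Longrightarrow> \<exists>F lam. orthon k F \<and> (\<forall>a<k. H *v F a = of_real (lam a) *s F a) \<and>
     (\<forall>a b. a \<le> b \<longrightarrow> b < k \<longrightarrow> lam b \<le> lam a) \<and>
     (0 < k \<longrightarrow> (\<forall>y. (\<forall>a<k. cinner (F a) y = 0) \<longrightarrow> rq H y \<le> lam (k - 1) * (norm y)^2))"
proof (induction k)
  case 0
  show ?case by (rule exI[of _ "\<lambda>_. 0"], rule exI[of _ "\<lambda>_. 0"]) (simp add: orthon_def)
next
  case (Suc k)
  then obtain F lam where o: "orthon k F" and eig: "\<forall>a<k. H *v F a = of_real (lam a) *s F a"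
    and srt: "\<forall>a b. a \<le> b \<longrightarrow> b < k \<longrightarrow> lam b \<le> lam a"
    and mx: "0 < k \<longrightarrow> (\<forall>y. (\<forall>a<k. cinner (F a) y = 0) \<longrightarrow> rq H y \<le> lam (k - 1) * (norm y)^2)"
    by auto
  obtain x where nx: "norm x = 1" and Wx: "\<forall>a<k. cinner (F a) x = 0"
    and ex: "H *v x = of_real (rq H x) *s x"
    and hx: "\<forall>y. (\<forall>a<k. cinner (F a) y = 0) \<longrightarrow> rq H y \<le> rq H x * (norm y)^2"
    using max_eig[OF herm o eig] Suc.prems by auto
  define F' where "F' = F(k := x)"
  define lam' where "lam' = lam(k := rq H x)"
  have "orthon (Suc k) F'"
    unfolding orthon_def
  proof (intro allI impI)
    fix a b assume a: "a < Suc k" and b: "b < Suc k"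
    have xx: "cinner x x = 1" using nx by (simp add: cinner_self)
    have xa: "cinner x (F a) = 0" if "a < k" for a using Wx that cinner_commute[of x "F a"] by simp
    show "cinner (F' a) (F' b) = (if a = b then 1 else 0)"
      using a b o Wx xx xa by (auto simp: F'_def orthon_def less_Suc_eq)
  qed
  moreover have "\<forall>a<Suc k. H *v F' a = of_real (lam' a) *s F' a"
    using eig ex by (auto simp: F'_def lam'_def less_Suc_eq)
  moreover have "\<forall>a b. a \<le> b \<longrightarrow> b < Suc k \<longrightarrow> lam' b \<le> lam' a"
  proof (intro allI impI)
    fix a b assume ab: "a \<le> b" "b < Suc k"
    show "lam' b \<le> lam' a"
    proof (cases "b = k")
      case True
      show ?thesis
      proof (cases "a = k")
        case False
        then have "a < k" "0 < k" using ab True by auto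
        then have "rq H x \<le> lam (k - 1)" using mx Wx nx by auto
        moreover have "lam (k - 1) \<le> lam a" using srt \<open>a < k\<close> by auto
        ultimately show ?thesis using True False by (simp add: lam'_def)
      qed (use True in simp)
    next
      case False
      then show ?thesis using ab srt by (auto simp: lam'_def)
    qed
  qed
  moreover have "\<forall>y. (\<forall>a<Suc k. cinner (F' a) y = 0) \<longrightarrow> rq H y \<le> lam' (Suc k - 1) * (norm y)^2"
    using hx by (auto simp: F'_def lam'_def)
  ultimately show ?case by blast
qed

lemma spectral:
  fixes H :: "complex^'n^'n"
  assumes herm: "cadjoint H = H"
  obtains F lam where "orthon CARD('n) F" "\<forall>a<CARD('n). H *v F a = of_real (lam a) *s F a"
     "\<forall>a b. a \<le> b \<longrightarrow> b < CARD('n) \<longrightarrow> lam b \<le> lam a"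
  using spectral_aux[OF herm, of "CARD('n)"] by blast

lemma poly_det: "poly (det A) z = det (\<chi> i j. poly (A$i$j) z)"
  unfolding det_def by (simp add: poly_sum poly_prod poly_of_int)

lemma cpoly_eval: "poly (cpoly H) z = det (mat z - H)"
  unfolding cpoly_def poly_det
  by (rule arg_cong[where f=det]) (simp add: vec_eq_iff mat_def)

lemma mat_commute: "mat z ** (Y::'a::comm_ring_1^'n^'n) = Y ** mat z"
proof -
  have a: "(if P then x else 0) * y = (if P then x * y else 0)" for P and x y :: 'a by simp
  have b: "y * (if P then x else 0) = (if P then y * x else 0)" for P and x y :: 'a by simp
  show ?thesis by (simp add: vec_eq_iff matrix_matrix_mult_def mat_def a b mult.commute)
qed

lemma matrix_sub_rdistrib': "(A - B) ** (C::'a::comm_ring_1^'p^'n) = A ** C - B ** C"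
  by (simp add: vec_eq_iff matrix_matrix_mult_def left_diff_distrib sum_subtractf)

lemma matrix_sub_ldistrib': "(C::'a::comm_ring_1^'n^'m) ** (A - B) = C ** A - C ** B"
  by (simp add: vec_eq_iff matrix_matrix_mult_def right_diff_distrib sum_subtractf)

lemma cpoly_herm:
  fixes H :: "complex^'n^'n"
  assumes o: "orthon CARD('n) F" and eig: "\<forall>a<CARD('n). H *v F a = of_real (lam a) *s F a"
  shows "cpoly H = (\<Prod>a<CARD('n). [:- of_real (lam a), 1:])"
proof -
  let ?n = "CARD('n)"
  obtain b :: "nat \<Rightarrow> 'n" where b: "bij_betw b {..<?n} UNIV"
    using ex_bij_betw_nat_finite[of "UNIV :: 'n set"] by (auto simp: atLeast0LessThan)
  define ib where "ib = inv_into {..<?n} b"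
  have ibn: "ib c < ?n" for c using b unfolding ib_def
    by (metis bij_betw_def inv_into_into lessThan_iff UNIV_I)
  have bib: "b (ib c) = c" for c using b unfolding ib_def by (simp add: bij_betw_inv_into_right)
  have ibb: "a < ?n \<Longrightarrow> ib (b a) = a" for a using b unfolding ib_def by (simp add: bij_betw_inv_into_left)
  have ibinj: "ib c = ib d \<longleftrightarrow> c = d" for c d using bib by metis
  define Y where "Y = (\<chi> r c. F (ib c) $ r)"
  define Dg where "Dg = (\<chi> c d. if c = d then of_real (lam (ib c)) else (0::complex))"
  have YY: "cadjoint Y ** Y = mat 1"
  proof -
    have "(cadjoint Y ** Y) $ c $ d = cinner (F (ib c)) (F (ib d))" for c d
      by (simp add: Y_def cadjoint_def matrix_matrix_mult_def cinner_def)
    then show ?thesis using o ibn ibinj by (simp add: vec_eq_iff mat_def orthon_def)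
  qed
  have HY: "H ** Y = Y ** Dg"
  proof -
    have "(H ** Y) $ r $ c = (H *v F (ib c)) $ r" for r c
      by (simp add: Y_def matrix_matrix_mult_def matrix_vector_mult_def)
    also have "\<dots> r c = of_real (lam (ib c)) * F (ib c) $ r" for r c using eig ibn by simp
    finally have 1: "(H ** Y) $ r $ c = of_real (lam (ib c)) * F (ib c) $ r" for r c .
    have 2: "(Y ** Dg) $ r $ c = of_real (lam (ib c)) * F (ib c) $ r" for r c
    proof -
      have "(Y ** Dg) $ r $ c = (\<Sum>d\<in>UNIV. Y $ r $ d * Dg $ d $ c)" by (simp add: matrix_matrix_mult_def)
      also have "\<dots> = Y $ r $ c * Dg $ c $ c" by (rule sum_single) (auto simp: Dg_def)
      finally show ?thesis by (simp add: Y_def Dg_def)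
    qed
    show ?thesis using 1 2 by (simp add: vec_eq_iff)
  qed
  have conj: "cadjoint Y ** (mat z - H) ** Y = mat z - Dg" for z
  proof -
    have "cadjoint Y ** (mat z - H) ** Y = cadjoint Y ** ((mat z - H) ** Y)"
      by (simp add: matrix_mul_assoc)
    also have "\<dots> = cadjoint Y ** (Y ** mat z) - (cadjoint Y ** Y) ** Dg"
      by (simp add: matrix_sub_rdistrib' matrix_sub_ldistrib' mat_commute HY matrix_mul_assoc)
    also have "\<dots> = mat z - Dg" by (simp add: matrix_mul_assoc YY matrix_mul_lid)
    finally show ?thesis .
  qed
  have dY: "det (cadjoint Y) * det Y = 1" using det_mul[of "cadjoint Y" Y] YY by (simp add: det_I)
  have ev: "poly (cpoly H) z = (\<Prod>a<?n. z - of_real (lam a))" for z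
  proof -
    have "poly (cpoly H) z = det (mat z - H)" by (rule cpoly_eval)
    also have "\<dots> = det (cadjoint Y) * det (mat z - H) * det Y" using dY by (simp add: mult_ac)
    also have "\<dots> = det (mat z - Dg)" by (simp add: det_mul conj[symmetric])
    also have "\<dots> = (\<Prod>c\<in>UNIV. z - of_real (lam (ib c)))"
      by (subst det_diagonal) (auto simp: Dg_def mat_def)
    also have "\<dots> = (\<Prod>a<?n. z - of_real (lam (ib (b a))))"
      by (rule prod.reindex_bij_betw[symmetric, OF b])
    also have "\<dots> = (\<Prod>a<?n. z - of_real (lam a))" by (rule prod.cong) (auto simp: ibb)
    finally show ?thesis .
  qed
  show ?thesis
    by (subst poly_eq_poly_eq_iff[symmetric]) (simp add: fun_eq_iff ev poly_prod)
qed

lemma order_linear: "order x [:- c, 1:] = (if x = c then 1 else 0)"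
proof (cases "x = c")
  case True then show ?thesis using order_power_n_n[of c 1] by simp
next
  case False then show ?thesis by (simp add: order_0I)
qed

context fixes c :: "nat \<Rightarrow> complex"
begin

lemma prod_linear_nz: "(\<Prod>a<n. [:- c a, 1:]) \<noteq> 0"
  by (subst prod_zero_iff) auto

lemma order_prod_linear: "order x (\<Prod>a<n. [:- c a, 1:]) = card {a\<in>{..<n}. c a = x}"
proof (induction n)
  case 0 then show ?case by (simp add: order_0I)
next
  case (Suc n)
  have "order x (\<Prod>a<Suc n. [:- c a, 1:]) = order x ((\<Prod>a<n. [:- c a, 1:]) * [:- c n, 1:])"
    by simp
  also have "\<dots> = card {a\<in>{..<n}. c a = x} + (if x = c n then 1 else 0)"
    using prod_linear_nz[of "Suc n"] by (subst order_mult) (auto simp: Suc.IH order_linear)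
  also have "\<dots> = card {a\<in>{..<Suc n}. c a = x}"
  proof -
    have e: "{a\<in>{..<Suc n}. c a = x} = {a\<in>{..<n}. c a = x} \<union> (if x = c n then {n} else {})"
      by (auto simp: less_Suc_eq)
    show ?thesis unfolding e by (subst card_Un_disjoint) auto
  qed
  finally show ?case .
qed

lemma eig_of_prod:
  "(\<Sum>x\<in>{x. poly (\<Prod>a<n. [:- c a, 1:]) x = 0}.
      replicate_mset (order x (\<Prod>a<n. [:- c a, 1:])) x) = image_mset c (mset_set {..<n})"
proof -
  have roots: "{x. poly (\<Prod>a<n. [:- c a, 1:]) x = 0} = c ` {..<n}"
    by (auto simp: poly_prod)
  show ?thesis
  proof (rule multiset_eqI)
    fix y
    have "count (\<Sum>x\<in>c ` {..<n}. replicate_mset (order x (\<Prod>a<n. [:- c a, 1:])) x) y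
        = (\<Sum>x\<in>c ` {..<n}. if x = y then order x (\<Prod>a<n. [:- c a, 1:]) else 0)"
      by (simp add: count_sum)
    also have "\<dots> = card {a\<in>{..<n}. c a = y}"
    proof (cases "y \<in> c ` {..<n}")
      case True
      then show ?thesis by (subst sum_single[of _ y]) (auto simp: order_prod_linear)
    next
      case False
      then have "{a\<in>{..<n}. c a = y} = {}" by auto
      then show ?thesis using False by (auto intro!: sum.neutral)
    qed
    also have "\<dots> = count (image_mset c (mset_set {..<n})) y"
      by (simp add: count_image_mset_eq_card_vimage)
    finally show "count (\<Sum>x\<in>{x. poly (\<Prod>a<n. [:- c a, 1:]) x = 0}.
        replicate_mset (order x (\<Prod>a<n. [:- c a, 1:])) x) y = count (image_mset c (mset_set {..<n})) y"
      unfolding roots .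
  qed
qed

end

lemma eig_mset_herm:
  fixes H :: "complex^'n^'n"
  assumes o: "orthon CARD('n) F" and eig: "\<forall>a<CARD('n). H *v F a = of_real (lam a) *s F a"
  shows "eig_mset H = image_mset (\<lambda>a. of_real (lam a)) (mset_set {..<CARD('n)})"
  unfolding eig_mset_def cpoly_herm[OF o eig] by (rule eig_of_prod)

lemma svd:
  fixes Z :: "complex^'n^'m"
  obtains F \<sigma> where "orthon CARD('n) F"
    "\<forall>a<CARD('n). \<sigma> a = norm (Z *v F a)"
    "\<forall>a b. a \<le> b \<longrightarrow> b < CARD('n) \<longrightarrow> \<sigma> b \<le> \<sigma> a"
    "\<forall>a<CARD('n). \<forall>b<CARD('n). a \<noteq> b \<longrightarrow> cinner (Z *v F a) (Z *v F b) = 0"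
    "singvals Z = map \<sigma> [0..<min CARD('m) CARD('n)]"
proof -
  let ?n = "CARD('n)"
  define H where "H = cadjoint Z ** Z"
  have herm: "cadjoint H = H" unfolding H_def by (simp add: cadjoint_mult)
  obtain F lam where o: "orthon ?n F" and eig: "\<forall>a<?n. H *v F a = of_real (lam a) *s F a"
    and srt: "\<forall>a b. a \<le> b \<longrightarrow> b < ?n \<longrightarrow> lam b \<le> lam a"
    using spectral[OF herm] by blast
  have key: "cinner (Z *v u) (Z *v v) = cinner u (H *v v)" for u v
  proof -
    have "cinner u (H *v v) = cinner u (cadjoint Z *v (Z *v v))"
      by (simp add: H_def matrix_vector_mul_assoc)
    also have "\<dots> = cinner (Z *v u) (Z *v v)" by (simp add: cinner_adjoint)
    finally show ?thesis by simp
  qed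
  have zz: "cinner (Z *v F a) (Z *v F b) = of_real (lam b) * (if a = b then 1 else 0)"
    if "a < ?n" "b < ?n" for a b
    using key[of "F a" "F b"] eig that o by (simp add: cinner_scale_right orthon_def)
  have lamn: "lam a = (norm (Z *v F a))^2" if "a < ?n" for a
  proof -
    have "of_real ((norm (Z *v F a))^2) = (of_real (lam a) :: complex)"
      using zz[OF that that] by (simp only: cinner_self[symmetric]) simp
    then show ?thesis by (simp only: of_real_eq_iff)
  qed
  define \<sigma> where "\<sigma> a = sqrt (lam a)" for a
  have s1: "\<forall>a<?n. \<sigma> a = norm (Z *v F a)" using lamn by (simp add: \<sigma>_def)
  have s2: "\<forall>a b. a \<le> b \<longrightarrow> b < ?n \<longrightarrow> \<sigma> b \<le> \<sigma> a" using srt by (simp add: \<sigma>_def)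
  have s3: "\<forall>a<?n. \<forall>b<?n. a \<noteq> b \<longrightarrow> cinner (Z *v F a) (Z *v F b) = 0" using zz by simp
  have em: "eig_mset H = image_mset (\<lambda>a. of_real (lam a)) (mset_set {..<?n})"
    by (rule eig_mset_herm[OF o eig])
  define xs where "xs = map \<sigma> [0..<?n]"
  have m1: "image_mset (\<lambda>z. sqrt (Re z)) (eig_mset H) = mset xs"
    unfolding em xs_def by (simp add: multiset.map_comp comp_def \<sigma>_def[abs_def] mset_upt atLeast0LessThan)
  have srev: "sorted (rev xs)"
    unfolding sorted_rev_iff_nth_mono xs_def using s2 by simp
  have "sort xs = rev xs" by (rule properties_for_sort) (simp_all add: srev)
  then have "singvals Z = take (min CARD('m) ?n) xs"
    unfolding singvals_def H_def[symmetric] m1 by simp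
  also have "\<dots> = map \<sigma> [0..<min CARD('m) ?n]" by (simp add: xs_def take_map)
  finally show ?thesis using that o s1 s2 s3 by blast
qed

lemma comb_bound:
  fixes \<sigma> c :: "nat \<Rightarrow> real"
  assumes rn: "r \<le> n"
    and dec: "\<forall>a b. a \<le> b \<longrightarrow> b < n \<longrightarrow> \<sigma> b \<le> \<sigma> a"
    and nn: "\<forall>a<n. 0 \<le> \<sigma> a"
    and c01: "\<forall>a<n. 0 \<le> c a \<and> c a \<le> 1"
    and cs: "(\<Sum>a<n. c a) \<le> r"
  shows "(\<Sum>a<n. \<sigma> a * c a) \<le> (\<Sum>a<r. \<sigma> a)"
proof -
  define s where "s = (if r < n then \<sigma> r else 0)"
  have s0: "0 \<le> s" using nn by (simp add: s_def)
  have pt: "\<sigma> a * c a - (if a < r then \<sigma> a else 0) \<le> s * (c a - (if a < r then 1 else 0))"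
    if a: "a < n" for a
  proof (cases "a < r")
    case True
    then have "s \<le> \<sigma> a" using dec nn a by (auto simp: s_def)
    moreover have "c a - 1 \<le> 0" using c01 a by auto
    ultimately have "\<sigma> a * (c a - 1) \<le> s * (c a - 1)" by (intro mult_right_mono_neg) auto
    then show ?thesis using True by (simp add: algebra_simps)
  next
    case False
    then have "r < n" using a by simp
    then have "\<sigma> a \<le> s" using dec False a by (auto simp: s_def)
    then show ?thesis using False c01 a by (simp add: mult_right_mono)
  qed
  have "(\<Sum>a<n. \<sigma> a * c a - (if a < r then \<sigma> a else 0)) \<le> (\<Sum>a<n. s * (c a - (if a < r then 1 else 0)))"
    by (rule sum_mono) (use pt in auto)
  also have "\<dots> = s * ((\<Sum>a<n. c a) - r)"
  proof -
    have "(\<Sum>a<n. (if a < r then 1 else 0::real)) = real r"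
      using rn by (simp add: sum.If_cases Int_absorb1 lessThan_subset_iff[THEN iffD2] Collect_conj_eq[symmetric]
          lessThan_def[symmetric])
    then show ?thesis by (simp add: sum_distrib_left[symmetric] right_diff_distrib sum_subtractf)
  qed
  also have "\<dots> \<le> 0" using s0 cs by (simp add: mult_nonneg_nonpos)
  finally have "(\<Sum>a<n. \<sigma> a * c a) - (\<Sum>a<n. (if a < r then \<sigma> a else 0)) \<le> 0"
    by (simp add: sum_subtractf)
  moreover have "(\<Sum>a<n. (if a < r then \<sigma> a else 0)) = (\<Sum>a<r. \<sigma> a)"
    using rn by (intro sum.mono_neutral_cong_right) auto
  ultimately show ?thesis by simp
qed

lemma take_map_sum: "r \<le> p \<Longrightarrow> sum_list (take r (map \<sigma> [0..<p])) = (\<Sum>a<r. (\<sigma> a::real))"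
  by (simp add: take_map interv_sum_list_conv_sum_set_nat atLeast0LessThan min_def)

lemma svd_x:
  fixes Z :: "complex^'n^'m"
  assumes o: "orthon CARD('n) F" and s1: "\<forall>a<CARD('n). \<sigma> a = norm (Z *v F a)"
    and s3: "\<forall>a<CARD('n). \<forall>b<CARD('n). a \<noteq> b \<longrightarrow> cinner (Z *v F a) (Z *v F b) = 0"
  defines "x \<equiv> \<lambda>i. (1 / \<sigma> i) *\<^sub>R (Z *v F i)"
  shows "\<And>i. i < CARD('n) \<Longrightarrow> Z *v F i = \<sigma> i *\<^sub>R x i"
    and "orthoc CARD('n) x"
    and "\<And>w. Z *v w = (\<Sum>i<CARD('n). (cinner (F i) w * of_real (\<sigma> i)) *s x i)"
proof -
  show zx: "Z *v F i = \<sigma> i *\<^sub>R x i" if "i < CARD('n)" for i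
  proof (cases "\<sigma> i = 0")
    case True then have "Z *v F i = 0" using s1 that by simp
    then show ?thesis using True by (simp add: x_def)
  next
    case False then show ?thesis by (simp add: x_def)
  qed
  show "orthoc CARD('n) x"
    unfolding orthoc_def
  proof (intro conjI allI impI)
    fix a b assume "a < CARD('n)" "b < CARD('n)" "a \<noteq> b"
    then show "cinner (x a) (x b) = 0" using s3 by (simp add: x_def cinner_scaleR_left cinner_scaleR_right)
  next
    fix a assume a: "a < CARD('n)"
    show "norm (x a) \<le> 1"
    proof (cases "\<sigma> a = 0")
      case True then show ?thesis by (simp add: x_def)
    next
      case False
      then have "\<sigma> a > 0" using s1 a by (metis norm_ge_zero order_le_less)
      then show ?thesis using s1 a by (simp add: x_def)
    qed
  qed
  show "Z *v w = (\<Sum>i<CARD('n). (cinner (F i) w * of_real (\<sigma> i)) *s x i)" for w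
  proof -
    have "Z *v w = Z *v (\<Sum>i<CARD('n). cinner (F i) w *s F i)"
      using orthon_expand[OF o, of w] by simp
    also have "\<dots> = (\<Sum>i<CARD('n). cinner (F i) w *s (Z *v F i))"
      by (simp add: vec.sum vector_scalar_commute)
    also have "\<dots> = (\<Sum>i<CARD('n). (cinner (F i) w * of_real (\<sigma> i)) *s x i)"
      by (rule sum.cong) (auto simp: zx vec_eq_iff scaleR_conv_of_real[where 'a=complex] mult_ac)
    finally show ?thesis .
  qed
qed

lemma amgm: "(a::real) * b \<le> (a^2 + b^2) / 2"
  using sum_squares_bound[of a b] by simp

lemma kf_upper:
  fixes Z :: "complex^'n^'m" and u :: "nat \<Rightarrow> complex^'m" and v :: "nat \<Rightarrow> complex^'n"
  assumes ou: "orthoc r u" and ov: "orthoc r v" and r: "r \<le> min CARD('m) CARD('n)"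
  shows "Re (\<Sum>j<r. cinner (u j) (Z *v v j)) \<le> sum_list (take r (singvals Z))"
proof -
  let ?n = "CARD('n)"
  obtain F \<sigma> where o: "orthon ?n F" and s1: "\<forall>a<?n. \<sigma> a = norm (Z *v F a)"
    and s2: "\<forall>a b. a \<le> b \<longrightarrow> b < ?n \<longrightarrow> \<sigma> b \<le> \<sigma> a"
    and s3: "\<forall>a<?n. \<forall>b<?n. a \<noteq> b \<longrightarrow> cinner (Z *v F a) (Z *v F b) = 0"
    and sv: "singvals Z = map \<sigma> [0..<min CARD('m) ?n]"
    by (rule svd)
  define x where "x = (\<lambda>i. (1 / \<sigma> i) *\<^sub>R (Z *v F i))"
  have ox: "orthoc ?n x" and ex: "\<And>w. Z *v w = (\<Sum>i<?n. (cinner (F i) w * of_real (\<sigma> i)) *s x i)"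
    using svd_x[OF o s1 s3] unfolding x_def by blast+
  have snn: "\<forall>a<?n. 0 \<le> \<sigma> a" using s1 by simp
  define A where "A i j = cmod (cinner (F i) (v j))" for i j
  define B where "B i j = cmod (cinner (u j) (x i))" for i j
  define c where "c i = (\<Sum>j<r. A i j * B i j)" for i
  have T: "cinner (u j) (Z *v v j) = (\<Sum>i<?n. cinner (F i) (v j) * of_real (\<sigma> i) * cinner (u j) (x i))" for j
    by (subst ex) (simp add: cinner_sum_right cinner_scale_right)
  have "Re (\<Sum>j<r. cinner (u j) (Z *v v j)) \<le> (\<Sum>j<r. \<Sum>i<?n. \<sigma> i * (A i j * B i j))"
  proof -
    have "Re (\<Sum>j<r. cinner (u j) (Z *v v j)) = (\<Sum>j<r. \<Sum>i<?n. Re (cinner (F i) (v j) * of_real (\<sigma> i) * cinner (u j) (x i)))"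
      by (simp add: T Re_sum)
    also have "\<dots> \<le> (\<Sum>j<r. \<Sum>i<?n. cmod (cinner (F i) (v j) * of_real (\<sigma> i) * cinner (u j) (x i)))"
      by (intro sum_mono complex_Re_le_cmod)
    also have "\<dots> = (\<Sum>j<r. \<Sum>i<?n. \<sigma> i * (A i j * B i j))"
      using snn by (intro sum.cong refl) (simp add: A_def B_def norm_mult)
    finally show ?thesis .
  qed
  also have "\<dots> = (\<Sum>i<?n. \<sigma> i * c i)"
    by (subst sum.swap) (simp add: c_def sum_distrib_left)
  also have "\<dots> \<le> (\<Sum>a<r. \<sigma> a)"
  proof (rule comb_bound[OF _ s2 snn])
    show "r \<le> ?n" using r by simp
    show "\<forall>a<?n. 0 \<le> c a \<and> c a \<le> 1"
    proof (intro allI impI conjI)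
      fix i assume i: "i < ?n"
      show "0 \<le> c i" by (simp add: c_def A_def B_def sum_nonneg)
      have "c i \<le> (\<Sum>j<r. ((A i j)^2 + (B i j)^2) / 2)" unfolding c_def by (intro sum_mono amgm)
      also have "\<dots> = ((\<Sum>j<r. (A i j)^2) + (\<Sum>j<r. (B i j)^2)) / 2"
        by (simp add: sum.distrib sum_divide_distrib[symmetric])
      also have "\<dots> \<le> (1 + 1) / 2"
      proof -
        have "(\<Sum>j<r. (A i j)^2) = (\<Sum>j<r. (cmod (cinner (v j) (F i)))^2)"
          by (simp add: A_def cinner_commute[of "F i"])
        also have "\<dots> \<le> (norm (F i))^2" by (rule bessel[OF ov])
        also have "\<dots> = 1" using orthon_norm[OF o i] by simp
        finally have 1: "(\<Sum>j<r. (A i j)^2) \<le> 1" .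
        have "(\<Sum>j<r. (B i j)^2) \<le> (norm (x i))^2" unfolding B_def by (rule bessel[OF ou])
        also have "\<dots> \<le> 1" using ox i by (simp add: orthoc_def power_le_one)
        finally show ?thesis using 1 by simp
      qed
      finally show "c i \<le> 1" by simp
    qed
    show "(\<Sum>a<?n. c a) \<le> r"
    proof -
      have "(\<Sum>a<?n. c a) \<le> (\<Sum>i<?n. \<Sum>j<r. ((A i j)^2 + (B i j)^2) / 2)"
        unfolding c_def by (intro sum_mono amgm)
      also have "\<dots> = (\<Sum>j<r. ((\<Sum>i<?n. (A i j)^2) + (\<Sum>i<?n. (B i j)^2)) / 2)"
        by (subst sum.swap) (simp add: sum.distrib sum_divide_distrib[symmetric])
      also have "\<dots> \<le> (\<Sum>j<r. (1 + 1) / 2)"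
      proof (rule sum_mono)
        fix j assume j: "j \<in> {..<r}"
        have "(\<Sum>i<?n. (A i j)^2) \<le> (norm (v j))^2" unfolding A_def by (rule bessel[OF orthon_orthoc[OF o]])
        also have "\<dots> \<le> 1" using ov j by (simp add: orthoc_def power_le_one)
        finally have 1: "(\<Sum>i<?n. (A i j)^2) \<le> 1" .
        have "(\<Sum>i<?n. (B i j)^2) = (\<Sum>i<?n. (cmod (cinner (x i) (u j)))^2)"
          by (simp add: B_def cinner_commute[of "u j"])
        also have "\<dots> \<le> (norm (u j))^2" by (rule bessel[OF ox])
        also have "\<dots> \<le> 1" using ou j by (simp add: orthoc_def power_le_one)
        finally show "((\<Sum>i<?n. (A i j)^2) + (\<Sum>i<?n. (B i j)^2)) / 2 \<le> (1 + 1) / 2" using 1 by simp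
      qed
      also have "\<dots> = r" by simp
      finally show ?thesis .
    qed
  qed
  also have "\<dots> = sum_list (take r (singvals Z))" using r by (simp add: sv take_map_sum)
  finally show ?thesis .
qed

lemma kf_attain:
  fixes Z :: "complex^'n^'m"
  assumes r: "r \<le> min CARD('m) CARD('n)"
  shows "\<exists>u v. orthoc r u \<and> orthoc r v \<and>
     Re (\<Sum>j<r. cinner (u j) (Z *v v j)) = sum_list (take r (singvals Z))"
proof -
  let ?n = "CARD('n)"
  obtain F \<sigma> where o: "orthon ?n F" and s1: "\<forall>a<?n. \<sigma> a = norm (Z *v F a)"
    and s2: "\<forall>a b. a \<le> b \<longrightarrow> b < ?n \<longrightarrow> \<sigma> b \<le> \<sigma> a"
    and s3: "\<forall>a<?n. \<forall>b<?n. a \<noteq> b \<longrightarrow> cinner (Z *v F a) (Z *v F b) = 0"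
    and sv: "singvals Z = map \<sigma> [0..<min CARD('m) ?n]"
    by (rule svd)
  define x where "x = (\<lambda>i. (1 / \<sigma> i) *\<^sub>R (Z *v F i))"
  have zx: "\<And>i. i < ?n \<Longrightarrow> Z *v F i = \<sigma> i *\<^sub>R x i" and ox: "orthoc ?n x"
    using svd_x[OF o s1 s3] unfolding x_def by blast+
  have rn: "r \<le> ?n" using r by simp
  have "Re (\<Sum>j<r. cinner (x j) (Z *v F j)) = (\<Sum>j<r. \<sigma> j)"
  proof -
    have "Re (cinner (x j) (Z *v F j)) = \<sigma> j" if j: "j < r" for j
    proof -
      have jn: "j < ?n" using j rn by simp
      have "cinner (x j) (Z *v F j) = of_real ((1 / \<sigma> j) * (norm (Z *v F j))^2)"
        by (simp add: x_def cinner_scaleR_left cinner_self)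
      then show ?thesis using s1 jn by (simp add: power2_eq_square)
    qed
    then show ?thesis by (simp add: Re_sum)
  qed
  moreover have "orthoc r x" "orthoc r F"
    using orthoc_mono[OF ox rn] orthoc_mono[OF orthon_orthoc[OF o] rn] by auto
  ultimately show ?thesis using r by (auto simp: sv take_map_sum)
qed

definition kf :: "nat \<Rightarrow> complex^'n^'m \<Rightarrow> real" where
  "kf r X = sum_list (take r (singvals X))"

lemma sv_facts:
  fixes X :: "complex^'n^'m"
  shows "length (singvals X) = min CARD('m) CARD('n)"
    and "sorted (rev (singvals X))"
    and "r \<le> min CARD('m) CARD('n) \<Longrightarrow> kf r X = (\<Sum>k<r. singvals X ! k)"
proof -
  obtain F \<sigma> where s2: "\<forall>a b. a \<le> b \<longrightarrow> b < CARD('n) \<longrightarrow> \<sigma> b \<le> \<sigma> a"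
    and sv: "singvals X = map \<sigma> [0..<min CARD('m) CARD('n)]"
    by (rule svd)
  show "length (singvals X) = min CARD('m) CARD('n)" by (simp add: sv)
  show "sorted (rev (singvals X))" unfolding sorted_rev_iff_nth_mono sv using s2 by simp
  show "kf r X = (\<Sum>k<r. singvals X ! k)" if "r \<le> min CARD('m) CARD('n)"
    using that by (simp add: kf_def sv take_map_sum)
qed

lemma sv_diff:
  fixes X :: "complex^'n^'m"
  assumes "k < min CARD('m) CARD('n)"
  shows "singvals X ! k = kf (Suc k) X - kf k X"
  using assms by (simp add: sv_facts(3))

lemma cinner_bound: "cmod (cinner (a::complex^'n) b) \<le> CARD('n) * (norm a * norm b)"
proof -
  have "cmod (cinner a b) \<le> (\<Sum>i\<in>UNIV. cmod (a$i) * cmod (b$i))"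
    unfolding cinner_def by (rule order_trans[OF norm_sum]) (simp add: norm_mult)
  also have "\<dots> \<le> (\<Sum>i\<in>(UNIV::'n set). norm a * norm b)"
    by (intro sum_mono mult_mono Finite_Cartesian_Product.norm_nth_le) auto
  finally show ?thesis by simp
qed

lemma norm_le_sum_vec: "norm (x::complex^'n) \<le> (\<Sum>i\<in>UNIV. norm (x$i))"
  unfolding norm_vec_def by (rule L2_set_le_sum) simp

lemma mv_bound: "norm ((X::complex^'n^'m) *v w) \<le> CARD('m) * (CARD('n) * (norm X * norm w))"
proof -
  have "norm ((X *v w) $ i) \<le> CARD('n) * (norm X * norm w)" for i
  proof -
    have "norm ((X *v w) $ i) \<le> (\<Sum>j\<in>UNIV. norm (X$i$j) * norm (w$j))"
      unfolding matrix_vector_mult_def by (simp, rule order_trans[OF norm_sum]) (simp add: norm_mult)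
    also have "\<dots> \<le> (\<Sum>j\<in>(UNIV::'n set). norm X * norm w)"
      by (intro sum_mono mult_mono order_trans[OF Finite_Cartesian_Product.norm_nth_le Finite_Cartesian_Product.norm_nth_le] Finite_Cartesian_Product.norm_nth_le) auto
    finally show ?thesis by simp
  qed
  then have "(\<Sum>i\<in>UNIV. norm ((X *v w) $ i)) \<le> (\<Sum>i\<in>(UNIV::'m set). CARD('n) * (norm X * norm w))"
    by (intro sum_mono) auto
  then show ?thesis using norm_le_sum_vec[of "X *v w"] by simp
qed

lemma kf_bound:
  fixes X :: "complex^'n^'m"
  assumes r: "r \<le> min CARD('m) CARD('n)"
  shows "kf r X \<le> r * (CARD('m) * (CARD('m) * CARD('n))) * norm X"
proof -
  obtain u v where ou: "orthoc r u" and ov: "orthoc r v"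
    and eq: "Re (\<Sum>j<r. cinner (u j) (X *v v j)) = sum_list (take r (singvals X))"
    using kf_attain[OF r] by blast
  have "kf r X = Re (\<Sum>j<r. cinner (u j) (X *v v j))" by (simp only: kf_def eq)
  also have "\<dots> \<le> (\<Sum>j<r. cmod (cinner (u j) (X *v v j)))"
    by (simp add: Re_sum sum_mono complex_Re_le_cmod)
  also have "\<dots> \<le> (\<Sum>j<r. CARD('m) * (CARD('m) * (CARD('n) * norm X)))"
  proof (rule sum_mono)
    fix j assume j: "j \<in> {..<r}"
    have nu: "norm (u j) \<le> 1" using ou j by (simp add: orthoc_def)
    have nv: "norm (v j) \<le> 1" using ov j by (simp add: orthoc_def)
    have "norm (X *v v j) \<le> CARD('m) * (CARD('n) * (norm X * norm (v j)))" by (rule mv_bound)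
    also have "\<dots> \<le> CARD('m) * (CARD('n) * (norm X * 1))"
      using nv by (intro mult_left_mono) auto
    finally have 1: "norm (X *v v j) \<le> CARD('m) * (CARD('n) * norm X)" by simp
    have "cmod (cinner (u j) (X *v v j)) \<le> CARD('m) * (norm (u j) * norm (X *v v j))"
      by (rule cinner_bound)
    also have "\<dots> \<le> CARD('m) * (1 * (CARD('m) * (CARD('n) * norm X)))"
      using nu 1 by (intro mult_left_mono mult_mono) auto
    finally show "cmod (cinner (u j) (X *v v j)) \<le> CARD('m) * (CARD('m) * (CARD('n) * norm X))" by simp
  qed
  also have "\<dots> = r * (CARD('m) * (CARD('m) * CARD('n))) * norm X" by (simp add: mult_ac)
  finally show ?thesis .
qed

lemma kf_sub:
  fixes A B :: "complex^'n^'m"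
  assumes r: "r \<le> min CARD('m) CARD('n)"
  shows "kf r A \<le> kf r B + kf r (A - B)"
proof -
  obtain u v where ou: "orthoc r u" and ov: "orthoc r v"
    and eq: "Re (\<Sum>j<r. cinner (u j) (A *v v j)) = sum_list (take r (singvals A))"
    using kf_attain[OF r] by blast
  have "kf r A = Re (\<Sum>j<r. cinner (u j) (B *v v j)) + Re (\<Sum>j<r. cinner (u j) ((A - B) *v v j))"
    by (simp add: kf_def eq[symmetric] matrix_vector_mult_diff_rdistrib cinner_diff_right sum_subtractf)
  also have "\<dots> \<le> kf r B + kf r (A - B)"
    unfolding kf_def by (intro add_mono kf_upper[OF ou ov r])
  finally show ?thesis .
qed

lemma kf_cont:
  assumes r: "r \<le> min CARD('m) CARD('n)"
  shows "continuous_on S (kf r :: complex^'n^'m \<Rightarrow> real)"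
proof (rule lipschitz_on_continuous_on)
  define L where "L = real r * (CARD('m) * (CARD('m) * CARD('n)))"
  show "L-lipschitz_on S (kf r)"
  proof (rule lipschitz_onI)
    fix A B :: "complex^'n^'m"
    have 1: "kf r A - kf r B \<le> L * norm (A - B)"
      using kf_sub[OF r, of A B] kf_bound[OF r, of "A - B"] by (simp add: L_def)
    have 2: "kf r B - kf r A \<le> L * norm (A - B)"
      using kf_sub[OF r, of B A] kf_bound[OF r, of "B - A"] by (simp add: L_def norm_minus_commute)
    show "dist (kf r A) (kf r B) \<le> L * dist A B"
      using 1 2 by (simp add: dist_real_def dist_norm abs_le_iff)
    show "0 \<le> L" by (simp add: L_def)
  qed
qed

lemma sv_cont:
  assumes k: "k < min CARD('m) CARD('n)"
  shows "continuous_on S (\<lambda>X::complex^'n^'m. singvals X ! k)"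
proof -
  have "continuous_on S (\<lambda>X::complex^'n^'m. kf (Suc k) X - kf k X)"
    using k by (intro continuous_on_diff kf_cont) auto
  then show ?thesis by (rule continuous_on_cong[THEN iffD1, rotated 2]) (auto simp: sv_diff[OF k])
qed

lemma rev_sort_id: "sorted (rev xs) \<Longrightarrow> rev (sort xs) = (xs :: real list)"
proof -
  assume "sorted (rev xs)"
  then have "sort xs = rev xs" by (intro properties_for_sort) auto
  then show ?thesis by simp
qed

theorem proposition4p1:
  fixes \<gamma> \<gamma>' :: "real \<Rightarrow> complex^'n^'m" and C D :: "complex^'n^'m"
  assumes "smooth_on_01 \<gamma>"
    and "\<And>t. t \<in> {0..1} \<Longrightarrow> (\<gamma> has_vector_derivative \<gamma>' t) (at t within {0..1})"
    and "\<gamma> 0 = C" and "\<gamma> 1 = D"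
  shows "singvals (D - C) \<prec>\<^sub>w
    map (\<lambda>k. integral {0..1} (\<lambda>t. singvals (\<gamma>' t) ! k)) [0..<min CARD('m) CARD('n)]"
proof -
  let ?p = "min CARD('m) CARD('n)"
  obtain f where f0: "f 0 = \<gamma>"
    and fd: "\<forall>k. \<forall>t\<in>{0..1}. (f k has_vector_derivative f (Suc k) t) (at t within {0..1::real})"
    using assms(1) unfolding smooth_on_01_def by blast
  have nb: "at t within {0..1::real} \<noteq> bot" if "t \<in> {0..1}" for t
    using that by (simp add: trivial_limit_within islimpt_Icc)
  have gf: "\<gamma>' t = f 1 t" if t: "t \<in> {0..1}" for t
  proof -
    have "(\<gamma> has_vector_derivative f 1 t) (at t within {0..1})" using fd t f0 by force
    then show ?thesis using vector_derivative_unique_within[OF nb[OF t] assms(2)[OF t]] by blast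
  qed
  have cf1: "continuous_on {0..1} (f 1)"
    unfolding continuous_on_eq_continuous_within
  proof
    fix t :: real assume t: "t \<in> {0..1}"
    have "(f 1 has_vector_derivative f (Suc 1) t) (at t within {0..1})" using fd t by blast
    then show "continuous (at t within {0..1}) (f 1)"
      by (intro differentiable_imp_continuous_within differentiableI_vector)
  qed
  have cg: "continuous_on {0..1} \<gamma>'"
    using cf1 by (rule continuous_on_cong[THEN iffD1, rotated 2]) (auto simp: gf)
  define I where "I k = integral {0..1} (\<lambda>t. singvals (\<gamma>' t) ! k)" for k
  have hi: "((\<lambda>t. singvals (\<gamma>' t) ! k) has_integral I k) {0..1}" if k: "k < ?p" for k
  proof -
    have "continuous_on {0..1} (\<lambda>t. singvals (\<gamma>' t) ! k)"
      by (rule continuous_on_compose2[OF sv_cont[OF k] cg]) auto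
    then show ?thesis unfolding I_def by (intro integrable_integral integrable_continuous_real)
  qed
  have ftc: "(\<gamma>' has_integral D - C) {0..1}"
    using fundamental_theorem_of_calculus[of 0 1 \<gamma> \<gamma>'] assms by simp
  define y where "y = map I [0..<?p]"
  have ysrt: "sorted (rev y)"
    unfolding sorted_rev_iff_nth_mono y_def
  proof (intro allI impI)
    fix i j assume ij: "i \<le> j" "j < length (map I [0..<?p])"
    then have jp: "j < ?p" and ip: "i < ?p" by auto
    have "I j \<le> I i"
    proof (rule has_integral_le[OF hi[OF jp] hi[OF ip]])
      fix t
      show "singvals (\<gamma>' t) ! j \<le> singvals (\<gamma>' t) ! i"
        using sorted_rev_nth_mono[OF sv_facts(2)[of "\<gamma>' t"] ij(1)] jp by (simp add: sv_facts(1))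
    qed
    then show "map I [0..<?p] ! j \<le> map I [0..<?p] ! i" using ip jp by simp
  qed
  show ?thesis
    unfolding weak_majorized_def
  proof (intro conjI ballI)
    show "length (singvals (D - C)) = length (map (\<lambda>k. integral {0..1} (\<lambda>t. singvals (\<gamma>' t) ! k)) [0..<?p])"
      by (simp add: sv_facts(1))
  next
    fix r assume r: "r \<in> {1..length (singvals (D - C))}"
    then have rp: "r \<le> ?p" by (simp add: sv_facts(1))
    have e1: "rev (sort (singvals (D - C))) = singvals (D - C)" by (rule rev_sort_id[OF sv_facts(2)])
    have e2: "map (\<lambda>k. integral {0..1} (\<lambda>t. singvals (\<gamma>' t) ! k)) [0..<?p] = y"
      by (simp add: y_def I_def)
    have e3: "rev (sort y) = y" by (rule rev_sort_id[OF ysrt])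
    obtain u v where ou: "orthoc r u" and ov: "orthoc r v"
      and eq: "Re (\<Sum>j<r. cinner (u j) ((D - C) *v v j)) = sum_list (take r (singvals (D - C)))"
      using kf_attain[OF rp] by blast
    define L where "L X = Re (\<Sum>j<r. cinner (u j) (X *v v j))" for X :: "complex^'n^'m"
    have "linear L"
    proof (rule linearI)
      fix A B :: "complex^'n^'m"
      show "L (A + B) = L A + L B"
        by (simp add: L_def matrix_vector_mult_add_rdistrib cinner_add_right sum.distrib)
    next
      fix c :: real and A :: "complex^'n^'m"
      show "L (c *\<^sub>R A) = c *\<^sub>R L A"
      proof -
        have m: "(c *\<^sub>R A) *v w = c *\<^sub>R (A *v w)" for w
          by (simp add: vec_eq_iff matrix_vector_mult_def sum_distrib_left scaleR_conv_of_real[where 'a=complex] mult_ac)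
        have "L (c *\<^sub>R A) = Re (\<Sum>j<r. of_real c * cinner (u j) (A *v v j))"
          by (simp only: L_def m cinner_scaleR_right)
        also have "\<dots> = Re (of_real c * (\<Sum>j<r. cinner (u j) (A *v v j)))"
          by (simp only: sum_distrib_left)
        also have "\<dots> = c *\<^sub>R L A" by (simp add: L_def)
        finally show ?thesis .
      qed
    qed
    then have bl: "bounded_linear L" by (simp add: linear_conv_bounded_linear)
    have h1: "((L \<circ> \<gamma>') has_integral L (D - C)) {0..1}" by (rule has_integral_linear[OF ftc bl])
    have h2: "((\<lambda>t. \<Sum>k<r. singvals (\<gamma>' t) ! k) has_integral (\<Sum>k<r. I k)) {0..1}"
      using rp by (intro has_integral_sum) (auto intro: hi)
    have "L (D - C) \<le> (\<Sum>k<r. I k)"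
    proof (rule has_integral_le[OF h1 h2])
      fix t
      have "L (\<gamma>' t) \<le> kf r (\<gamma>' t)" unfolding L_def kf_def by (rule kf_upper[OF ou ov rp])
      then show "(L \<circ> \<gamma>') t \<le> (\<Sum>k<r. singvals (\<gamma>' t) ! k)" using sv_facts(3)[OF rp] by simp
    qed
    moreover have "L (D - C) = sum_list (take r (singvals (D - C)))" by (simp only: L_def eq)
    moreover have "sum_list (take r y) = (\<Sum>k<r. I k)" unfolding y_def by (rule take_map_sum[OF rp])
    ultimately show "sum_list (take r (rev (sort (singvals (D - C)))))
        \<le> sum_list (take r (rev (sort (map (\<lambda>k. integral {0..1} (\<lambda>t. singvals (\<gamma>' t) ! k)) [0..<?p]))))"
      unfolding e1 e2 e3 by simp
  qed
qed


end
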